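(* Let $\mathcal{C}\le\mathbb{F}_q^n$ be a linear code with $q\neq 2$, and assume every codeword of $\mathcal{C}$ has even weight. Let $c_1,\dots,c_r\in\mathcal{C}$ be codewords of weight $2$ such that $c_i\notin\langle c_j\rangle_{\mathbb{F}_q}$ for all $i\neq j$. Then $\mathrm{supp}(c_i)\cap\mathrm{supp}(c_j)=\emptyset$ for all $i\neq j$.
   Context: The support of $c\in\mathbb{F}_q^n$ is $\mathrm{supp}(c)=\{k: c_k\neq 0\}$ and its weight is $|\mathrm{supp}(c)|$. *)

theory Defs
  imports "HOL-Analysis.Analysis"
begin

text \<open>Vectors in F_q^n are rendered as 'a ^ 'n with 'a a finite field and 'n a finite
index type with CARD('n) = n. Support and Hamming weight:\<close>

definition supp :: "'a::zero ^ 'n \<Rightarrow> 'n set" where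
  "supp c = {k. c $ k \<noteq> 0}"

definition weight :: "'a::zero ^ 'n \<Rightarrow> nat" where
  "weight c = card (supp c)"

end

theory Submission
  imports Defs
begin

lemma two_elem: "card S = 2 \<Longrightarrow> k \<in> S \<Longrightarrow> \<exists>a. a \<noteq> k \<and> S = {k,a}"
  by (auto simp: card_2_iff)

lemma main:
  fixes C :: "('a::{field,finite} ^ 'n) set" and u v :: "'a ^ 'n"
  assumes q: "CARD('a) \<noteq> 2"
    and lin: "vec.subspace C"
    and even: "\<forall>x\<in>C. even (weight x)"
    and uC: "u \<in> C" and vC: "v \<in> C"
    and wu: "weight u = 2" and wv: "weight v = 2"
    and ns: "u \<notin> vec.span {v}"
    and k: "k \<in> supp u" "k \<in> supp v"
  shows False
proof -
  obtain a where a: "a \<noteq> k" "supp u = {k,a}"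
    using two_elem[OF wu[unfolded weight_def] k(1)] by blast
  obtain b where b: "b \<noteq> k" "supp v = {k,b}"
    using two_elem[OF wv[unfolded weight_def] k(2)] by blast
  have uk: "u $ k \<noteq> 0" "u $ a \<noteq> 0"
    using a(2) unfolding supp_def by (metis insertI1 insertI2 mem_Collect_eq singletonI)+
  have vk: "v $ k \<noteq> 0" "v $ b \<noteq> 0"
    using b(2) unfolding supp_def by (metis insertI1 insertI2 mem_Collect_eq singletonI)+
  have u0: "\<And>m. m \<noteq> k \<Longrightarrow> m \<noteq> a \<Longrightarrow> u $ m = 0"
  proof -
    fix m assume "m \<noteq> k" "m \<noteq> a"
    hence "m \<notin> supp u" using a(2) by simp
    thus "u $ m = 0" by (simp add: supp_def)
  qed
  have v0: "\<And>m. m \<noteq> k \<Longrightarrow> m \<noteq> b \<Longrightarrow> v $ m = 0"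
  proof -
    fix m assume "m \<noteq> k" "m \<noteq> b"
    hence "m \<notin> supp v" using b(2) by simp
    thus "v $ m = 0" by (simp add: supp_def)
  qed
  show False
  proof (cases "a = b")
    case True
    define s where "s = u $ k / v $ k"
    define x where "x = u - s *s v"
    have xC: "x \<in> C" unfolding x_def using lin uC vC
      by (simp add: vec.subspace_diff vec.subspace_scale)
    have "supp x \<subseteq> {a}"
    proof
      fix m assume m: "m \<in> supp x"
      hence "x $ m \<noteq> 0" unfolding supp_def by auto
      moreover have "x $ k = 0" unfolding x_def s_def using vk by simp
      ultimately have "m \<noteq> k" by auto
      show "m \<in> {a}"
      proof (rule ccontr)
        assume "m \<notin> {a}"
        hence "u $ m = 0" "v $ m = 0" using u0 v0 True \<open>m \<noteq> k\<close> by auto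
        thus False using \<open>x $ m \<noteq> 0\<close> unfolding x_def by simp
      qed
    qed
    hence "card (supp x) \<le> 1" using card_mono[of "{a}" "supp x"] by simp
    moreover have "even (card (supp x))" using even xC unfolding weight_def by auto
    ultimately have "card (supp x) = 0" by presburger
    hence "supp x = {}" by simp
    hence "x = 0" unfolding supp_def by (auto simp: vec_eq_iff)
    hence "u = s *s v" unfolding x_def by simp
    hence "u \<in> vec.span {v}" by (simp add: vec.span_base vec.span_scale)
    thus False using ns by simp
  next
    case False
    have "card (UNIV::'a set) \<ge> 2"
    proof -
      have "{0, 1::'a} \<subseteq> UNIV" by simp
      hence "card {0,1::'a} \<le> card (UNIV::'a set)" by (rule card_mono[OF finite])
      thus ?thesis by simp
    qed
    hence "card (UNIV::'a set) > card {0, - (u $ k / v $ k)}"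
    proof -
      have "card {0, - (u $ k / v $ k)} \<le> 2" by (simp add: card_insert_le_m1)
      thus ?thesis using q \<open>card (UNIV::'a set) \<ge> 2\<close> by linarith
    qed
    then obtain t where t: "t \<notin> {0, - (u $ k / v $ k)}"
      using card_mono[OF finite, of "UNIV::'a set" "{0, - (u $ k / v $ k)}"] by auto
    define x where "x = u + t *s v"
    have xC: "x \<in> C" unfolding x_def using lin uC vC
      by (simp add: vec.subspace_add vec.subspace_scale)
    have "supp x = {k,a,b}"
    proof -
      have "x $ k \<noteq> 0"
      proof
        assume "x $ k = 0"
        hence "u $ k + t * v $ k = 0" unfolding x_def by simp
        hence "t = - (u $ k / v $ k)" using vk by (simp add: field_simps add_eq_0_iff)
        thus False using t by simp
      qed
      moreover have "x $ a \<noteq> 0" using v0[of a] a False uk t unfolding x_def by simp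
      moreover have "x $ b \<noteq> 0" using u0[of b] b False vk t unfolding x_def by auto
      moreover have "\<And>m. m \<notin> {k,a,b} \<Longrightarrow> x $ m = 0" using u0 v0 unfolding x_def by simp
      ultimately show ?thesis unfolding supp_def by auto
    qed
    hence "card (supp x) = 3" using a b False by simp
    thus False using even xC unfolding weight_def by auto
  qed
qed

theorem corollary3p2:
  fixes C :: "('a::{field,finite} ^ 'n) set"
    and c :: "nat \<Rightarrow> 'a ^ 'n"
    and r :: nat
  assumes q: "CARD('a) \<noteq> 2"
    and lin: "vec.subspace C"
    and even: "\<forall>x\<in>C. even (weight x)"
    and cC: "\<forall>i\<in>{1..r}. c i \<in> C"
    and w2: "\<forall>i\<in>{1..r}. weight (c i) = 2"
    and indep: "\<forall>i\<in>{1..r}. \<forall>j\<in>{1..r}. i \<noteq> j \<longrightarrow> c i \<notin> vec.span {c j}"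
  shows "\<forall>i\<in>{1..r}. \<forall>j\<in>{1..r}. i \<noteq> j \<longrightarrow> supp (c i) \<inter> supp (c j) = {}"
proof (intro ballI impI)
  fix i j assume i: "i \<in> {1..r}" and j: "j \<in> {1..r}" and ij: "i \<noteq> j"
  show "supp (c i) \<inter> supp (c j) = {}"
  proof (rule ccontr)
    assume "supp (c i) \<inter> supp (c j) \<noteq> {}"
    then obtain k where "k \<in> supp (c i)" "k \<in> supp (c j)" by blast
    thus False using main[OF q lin even, of "c i" "c j" k] cC w2 indep i j ij by simp
  qed
qed

end
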